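(* Let $1<\alpha<2$ and $\beta\geq 1$ with $\alpha-\beta+1>0$, and let $\tau>0$. Assume that $A$ is a closed linear operator on a Banach space $X$ which is $\omega$-sectorial of angle $\frac{(\alpha-1)\pi}{2}$ for some $\omega<0$. Then $A$ generates a discrete $(\alpha,\beta)$-resolvent family $\{S_{\alpha,\beta}^n\}_{n\in\mathbb{N}_0}\subset\mathcal{B}(X)$.
   Context: Fix a step size $\tau>0$. For $\gamma>0$ and $n\in\mathbb{N}_0$ let $k_\tau^\gamma(n):=\frac{\tau^{\gamma-1}\Gamma(\gamma+n)}{\Gamma(\gamma)\Gamma(n+1)}$. For $\alpha,\beta>0$, a sequence $\{S_{\alpha,\beta}^n\}_{n\in\mathbb{N}_0}\subset\mathcal{B}(X)$ is called a discrete $(\alpha,\beta)$-resolvent family generated by the closed operator $A:D(A)\subset X\to X$ if (1) $S^n_{\alpha,\beta}x\in D(A)$ for all $x\in X$, $n\in\mathbb N_0$, and $AS_{\alpha,\beta}^nx=S_{\alpha,\beta}^nAx$ for all $x\in D(A)$, $n\in\mathbb{N}_0$; (2) for every $x\in X$ and $n\in\mathbb{N}_0$, $S_{\alpha,\beta}^nx=k^\beta_\tau(n)x+\tau A\sum_{j=0}^n k^\alpha_\tau(n-j)S_{\alpha,\beta}^jx$. An operator $A$ is $\omega$-sectorial of angle $\theta$ (with $\theta\in[0,\pi/2)$, $\omega\in\mathbb R$) if its resolvent exists on $\omega+\Sigma_\theta:=\{\omega+\lambda:\lambda\in\mathbb C\setminus\{0\},\ |\arg\lambda|<\frac{\pi}{2}+\theta\}$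 and there is $M>0$ with $\|(\lambda-A)^{-1}\|\le \frac{M}{|\lambda-\omega|}$ for all $\lambda\in\omega+\Sigma_\theta$. *)

theory Defs
  imports "HOL-Analysis.Analysis"
begin

text \<open>A complex Banach space is modelled as a real Banach space of type 'a::banach
  together with a complex scalar multiplication sc extending the real one and
  compatible with the norm.\<close>
definition complex_scalar :: "(complex \<Rightarrow> 'a::banach \<Rightarrow> 'a) \<Rightarrow> bool" where
  "complex_scalar sc \<longleftrightarrow>
     (\<forall>a b x y. sc a (x + y) = sc a x + sc a y \<and> sc (a + b) x = sc a x + sc b x
        \<and> sc (a * b) x = sc a (sc b x) \<and> norm (sc a x) = cmod a * norm x)
   \<and> (\<forall>r x. sc (complex_of_real r) x = r *\<^sub>R x)"

definition bounded_op :: "(complex \<Rightarrow> 'a::banach \<Rightarrow> 'a) \<Rightarrow> ('a \<Rightarrow> 'a) \<Rightarrow> bool" where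
  "bounded_op sc T \<longleftrightarrow> bounded_linear T \<and> (\<forall>c x. T (sc c x) = sc c (T x))"

definition closed_linear_op :: "(complex \<Rightarrow> 'a::banach \<Rightarrow> 'a) \<Rightarrow> 'a set \<Rightarrow> ('a \<Rightarrow> 'a) \<Rightarrow> bool" where
  "closed_linear_op sc D A \<longleftrightarrow>
     0 \<in> D \<and> (\<forall>x\<in>D. \<forall>y\<in>D. x + y \<in> D \<and> A (x + y) = A x + A y)
   \<and> (\<forall>c. \<forall>x\<in>D. sc c x \<in> D \<and> A (sc c x) = sc c (A x))
   \<and> closed {(x, A x) | x. x \<in> D}"

definition is_resolvent :: "(complex \<Rightarrow> 'a::banach \<Rightarrow> 'a) \<Rightarrow> 'a set \<Rightarrow> ('a \<Rightarrow> 'a) \<Rightarrow> complex \<Rightarrow> ('a \<Rightarrow> 'a) \<Rightarrow> bool" where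
  "is_resolvent sc D A l R \<longleftrightarrow> bounded_op sc R
     \<and> (\<forall>y. R y \<in> D \<and> sc l (R y) - A (R y) = y)
     \<and> (\<forall>x\<in>D. R (sc l x - A x) = x)"

definition sector :: "real \<Rightarrow> real \<Rightarrow> complex set" where
  "sector \<omega> \<theta> = {complex_of_real \<omega> + z | z. z \<noteq> 0 \<and> \<bar>Arg z\<bar> < pi / 2 + \<theta>}"

definition omega_sectorial :: "(complex \<Rightarrow> 'a::banach \<Rightarrow> 'a) \<Rightarrow> 'a set \<Rightarrow> ('a \<Rightarrow> 'a) \<Rightarrow> real \<Rightarrow> real \<Rightarrow> bool" where
  "omega_sectorial sc D A \<omega> \<theta> \<longleftrightarrow> 0 \<le> \<theta> \<and> \<theta> < pi / 2 \<and>
     (\<exists>M>0. \<forall>l\<in>sector \<omega> \<theta>. \<exists>R. is_resolvent sc D A l R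
        \<and> (\<forall>y. norm (R y) \<le> M / cmod (l - complex_of_real \<omega>) * norm y))"

definition ktau :: "real \<Rightarrow> real \<Rightarrow> nat \<Rightarrow> real" where
  "ktau \<tau> \<gamma> n = \<tau> powr (\<gamma> - 1) * Gamma (\<gamma> + real n) / (Gamma \<gamma> * Gamma (real n + 1))"

definition discrete_resolvent_family ::
  "(complex \<Rightarrow> 'a::banach \<Rightarrow> 'a) \<Rightarrow> real \<Rightarrow> real \<Rightarrow> real \<Rightarrow> 'a set \<Rightarrow> ('a \<Rightarrow> 'a) \<Rightarrow> (nat \<Rightarrow> 'a \<Rightarrow> 'a) \<Rightarrow> bool" where
  "discrete_resolvent_family sc \<tau> \<alpha> \<beta> D A S \<longleftrightarrow>
     (\<forall>n. bounded_op sc (S n))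
   \<and> (\<forall>n x. S n x \<in> D)
   \<and> (\<forall>n. \<forall>x\<in>D. A (S n x) = S n (A x))
   \<and> (\<forall>n x. S n x = ktau \<tau> \<beta> n *\<^sub>R x
          + \<tau> *\<^sub>R A (\<Sum>j\<le>n. ktau \<tau> \<alpha> (n - j) *\<^sub>R S j x))"

end

theory Submission imports Defs begin

function Sq :: "real \<Rightarrow> (nat\<Rightarrow>real) \<Rightarrow> (nat\<Rightarrow>real) \<Rightarrow> real \<Rightarrow> ('a::real_vector\<Rightarrow>'a) \<Rightarrow> ('a\<Rightarrow>'a) \<Rightarrow> nat \<Rightarrow> 'a \<Rightarrow> 'a" where
"Sq c kb ka t A R n x = c *\<^sub>R R (kb n *\<^sub>R x + t *\<^sub>R (\<Sum>j<n. ka (n-j) *\<^sub>R A (Sq c kb ka t A R j x)))"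
  by pat_completeness auto
termination by (relation "Wellfounded.measure (\<lambda>(_,_,_,_,_,_,n,_). n)") auto
declare Sq.simps[simp del]

context
  fixes sc :: "complex \<Rightarrow> 'a::banach \<Rightarrow> 'a"
  assumes cs: "complex_scalar sc"
begin

lemma sc_add: "sc a (x + y) = sc a x + sc a y"
  using cs unfolding complex_scalar_def by blast

lemma sc_real: "sc (complex_of_real r) x = r *\<^sub>R x"
  using cs unfolding complex_scalar_def by blast

lemma sc_mult: "sc (a * b) x = sc a (sc b x)"
  using cs unfolding complex_scalar_def by blast

lemma sc_zero: "sc a 0 = 0"
  using cs unfolding complex_scalar_def by (metis mult_zero_right norm_eq_zero norm_zero)

lemma sc_scaleR: "sc c (r *\<^sub>R x) = r *\<^sub>R sc c x"
proof -
  have "sc c (r *\<^sub>R x) = sc c (sc (complex_of_real r) x)" by (simp add: sc_real)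
  also have "\<dots> = sc (complex_of_real r * c) x" by (simp add: sc_mult mult.commute)
  also have "\<dots> = r *\<^sub>R sc c x" by (simp add: sc_mult sc_real)
  finally show ?thesis .
qed

lemma sc_sum: "sc c (\<Sum>i\<in>I. f i) = (\<Sum>i\<in>I. sc c (f i))"
proof (induction I rule: infinite_finite_induct)
  case (infinite A) then show ?case by (simp add: sc_zero)
next
  case empty then show ?case by (simp add: sc_zero)
next
  case (insert x F) then show ?case by (simp add: sc_add)
qed

context
  fixes D A
  assumes cl: "closed_linear_op sc D A"
begin

lemma D0: "0 \<in> D" using cl unfolding closed_linear_op_def by blast

lemma A_add: "x \<in> D \<Longrightarrow> y \<in> D \<Longrightarrow> x + y \<in> D \<and> A (x + y) = A x + A y"
  using cl unfolding closed_linear_op_def by blast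

lemma A_sc: "x \<in> D \<Longrightarrow> sc c x \<in> D \<and> A (sc c x) = sc c (A x)"
  using cl unfolding closed_linear_op_def by blast

lemma A_scaleR: "x \<in> D \<Longrightarrow> r *\<^sub>R x \<in> D \<and> A (r *\<^sub>R x) = r *\<^sub>R A x"
  using A_sc[of x "complex_of_real r"] by (simp add: sc_real)

lemma A0: "A 0 = 0"
  using A_add[OF D0 D0] by simp

lemma A_sum: "(\<And>i. i \<in> I \<Longrightarrow> f i \<in> D) \<Longrightarrow> sum f I \<in> D \<and> A (sum f I) = (\<Sum>i\<in>I. A (f i))"
proof (induction I rule: infinite_finite_induct)
  case (infinite A) then show ?case by (simp add: D0 A0)
next
  case empty then show ?case by (simp add: D0 A0)
next
  case (insert x F) then show ?case using A_add by simp
qed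

end
end

theorem theorem3p5:
  fixes sc :: "complex \<Rightarrow> 'a::banach \<Rightarrow> 'a"
    and D :: "'a set" and A :: "'a \<Rightarrow> 'a"
    and \<alpha> \<beta> \<tau> \<omega> :: real
  assumes "complex_scalar sc"
    and "1 < \<alpha>" and "\<alpha> < 2" and "1 \<le> \<beta>" and "\<alpha> - \<beta> + 1 > 0" and "\<tau> > 0"
    and "closed_linear_op sc D A"
    and "\<omega> < 0"
    and "omega_sectorial sc D A \<omega> ((\<alpha> - 1) * pi / 2)"
  shows "\<exists>S. discrete_resolvent_family sc \<tau> \<alpha> \<beta> D A S"
proof -
  note cs = assms(1) and cl = assms(7)
  define l where "l = inverse (\<tau> powr \<alpha>)"
  have lpos: "l > 0" using assms(6) by (simp add: l_def)
  have tl: "\<tau> powr \<alpha> * l = 1" using assms(6) by (simp add: l_def)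
  have insec: "complex_of_real l \<in> sector \<omega> ((\<alpha> - 1) * pi / 2)"
  proof -
    have "complex_of_real (l - \<omega>) \<noteq> 0" using lpos assms(8) by simp
    moreover have "Arg (complex_of_real (l - \<omega>)) = 0" using lpos assms(8) by (simp only: Arg_of_real) simp
    moreover have "0 < pi / 2 + (\<alpha> - 1) * pi / 2" using assms(2) pi_gt_zero
      by (smt (verit) divide_pos_pos mult_pos_pos)
    ultimately show ?thesis unfolding sector_def
      by (intro CollectI exI[of _ "complex_of_real (l - \<omega>)"]) simp
  qed
  obtain R where R: "is_resolvent sc D A (complex_of_real l) R"
    using assms(9) insec unfolding omega_sectorial_def by blast
  have Rbl: "bounded_linear R" and Rsc: "\<And>c x. R (sc c x) = sc c (R x)"
    using R unfolding is_resolvent_def bounded_op_def by auto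
  have RD: "\<And>y. R y \<in> D" using R unfolding is_resolvent_def by blast
  have AR: "\<And>y. A (R y) = l *\<^sub>R R y - y"
    using R unfolding is_resolvent_def by (simp add: sc_real[OF cs] algebra_simps)
  have RA: "\<And>z. z \<in> D \<Longrightarrow> R (A z) = A (R z)"
  proof -
    fix z assume z: "z \<in> D"
    have "R (l *\<^sub>R z - A z) = z"
      using R z unfolding is_resolvent_def by (simp add: sc_real[OF cs])
    then have "l *\<^sub>R R z - R (A z) = z"
      using Rbl by (simp add: linear_simps)
    then show "R (A z) = A (R z)" using AR[of z] by (simp add: algebra_simps)
  qed
  define kb where "kb = ktau \<tau> \<beta>"
  define ka where "ka = ktau \<tau> \<alpha>"
  define S where "S = Sq l kb ka \<tau> A R"
  define Y where "Y n x = kb n *\<^sub>R x + \<tau> *\<^sub>R (\<Sum>j<n. ka (n-j) *\<^sub>R A (S j x))" for n x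
  have Sdef: "\<And>n x. S n x = l *\<^sub>R R (Y n x)"
    unfolding S_def Y_def by (subst Sq.simps) simp
  have SD: "\<And>n x. S n x \<in> D" using Sdef RD A_scaleR[OF cs cl] by simp
  have AS: "\<And>n x. A (S n x) = l *\<^sub>R (l *\<^sub>R R (Y n x) - Y n x)"
    using Sdef A_scaleR[OF cs cl] RD AR by simp
  have BL: "bounded_linear (S n) \<and> bounded_linear (\<lambda>x. A (S n x))" for n
  proof (induction n rule: less_induct)
    case (less n)
    have "bounded_linear (Y n)" unfolding Y_def
      using less
      by (intro bounded_linear_add bounded_linear_scaleR_right bounded_linear_ident
          bounded_linear_sum bounded_linear_compose[OF bounded_linear_scaleR_right]) auto
    then have Yb: "bounded_linear (\<lambda>x. Y n x)" by simp
    have b1: "bounded_linear (\<lambda>x. R (Y n x))" by (rule bounded_linear_compose[OF Rbl Yb])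
    have e1: "S n = (\<lambda>x. l *\<^sub>R R (Y n x))" using Sdef by auto
    have e2: "(\<lambda>x. A (S n x)) = (\<lambda>x. l *\<^sub>R (l *\<^sub>R R (Y n x) - Y n x))" using AS by auto
    show ?case unfolding e2 unfolding e1
      using b1 Yb
      by (intro conjI bounded_linear_compose[OF bounded_linear_scaleR_right] bounded_linear_sub) auto
  qed
  have HOM: "S n (sc c x) = sc c (S n x)" for n c x
  proof (induction n rule: less_induct)
    case (less n)
    have "Y n (sc c x) = sc c (Y n x)"
      unfolding Y_def using less SD
      by (simp add: sc_add[OF cs] sc_scaleR[OF cs] sc_sum[OF cs] A_sc[OF cs cl])
    then show ?case by (simp add: Sdef Rsc sc_scaleR[OF cs])
  qed
  have COMM: "x \<in> D \<Longrightarrow> S n (A x) = A (S n x)" for n x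
  proof (induction n rule: less_induct)
    case (less n)
    have ASD: "\<And>j. j < n \<Longrightarrow> A (S j x) \<in> D" using less SD by metis
    have AY: "A (Y n x) = kb n *\<^sub>R A x + \<tau> *\<^sub>R (\<Sum>j<n. ka (n-j) *\<^sub>R A (A (S j x)))"
      and YD: "Y n x \<in> D"
    proof -
      have s: "(\<Sum>j<n. ka (n-j) *\<^sub>R A (S j x)) \<in> D \<and>
          A (\<Sum>j<n. ka (n-j) *\<^sub>R A (S j x)) = (\<Sum>j<n. A (ka (n-j) *\<^sub>R A (S j x)))"
        using ASD by (intro A_sum[OF cs cl]) (simp add: A_scaleR[OF cs cl])
      have s2: "(\<Sum>j<n. A (ka (n-j) *\<^sub>R A (S j x))) = (\<Sum>j<n. ka (n-j) *\<^sub>R A (A (S j x)))"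
        using ASD A_scaleR[OF cs cl] by (intro sum.cong) auto
      show "A (Y n x) = kb n *\<^sub>R A x + \<tau> *\<^sub>R (\<Sum>j<n. ka (n-j) *\<^sub>R A (A (S j x)))"
        "Y n x \<in> D"
        unfolding Y_def using s s2 less.prems A_scaleR[OF cs cl] A_add[OF cs cl] by auto
    qed
    have "Y n (A x) = A (Y n x)"
      unfolding AY unfolding Y_def using less by (auto intro!: sum.cong)
    then show ?case using Sdef RA[OF YD] A_scaleR[OF cs cl] RD by simp
  qed
  have ka0: "ka 0 = \<tau> powr (\<alpha> - 1)"
    unfolding ka_def ktau_def using assms(2) by (auto simp add: Gamma_eq_zero_iff elim!: nonpos_Ints_cases)
  have EQ: "S n x = kb n *\<^sub>R x + \<tau> *\<^sub>R A (\<Sum>j\<le>n. ka (n - j) *\<^sub>R S j x)" for n x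
  proof -
    have "A (\<Sum>j\<le>n. ka (n - j) *\<^sub>R S j x) = (\<Sum>j\<le>n. A (ka (n - j) *\<^sub>R S j x))"
      using SD A_scaleR[OF cs cl] by (intro conjunct2[OF A_sum[OF cs cl]]) simp
    also have "\<dots> = (\<Sum>j\<le>n. ka (n - j) *\<^sub>R A (S j x))"
      using SD A_scaleR[OF cs cl] by simp
    also have "\<dots> = (\<Sum>j<n. ka (n - j) *\<^sub>R A (S j x)) + ka 0 *\<^sub>R A (S n x)"
      by (simp add: lessThan_Suc_atMost[symmetric])
    finally have e: "A (\<Sum>j\<le>n. ka (n - j) *\<^sub>R S j x) = (\<Sum>j<n. ka (n - j) *\<^sub>R A (S j x)) + ka 0 *\<^sub>R A (S n x)" .
    have tt: "\<tau> * \<tau> powr (\<alpha> - 1) = \<tau> powr \<alpha>"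
      using assms(6) by (simp add: powr_diff)
    have tA: "\<tau> *\<^sub>R (ka 0 *\<^sub>R A (S n x)) = l *\<^sub>R R (Y n x) - Y n x"
    proof -
      have "\<tau> *\<^sub>R (ka 0 *\<^sub>R A (S n x)) = (\<tau> * \<tau> powr (\<alpha> - 1) * l) *\<^sub>R (l *\<^sub>R R (Y n x) - Y n x)"
        unfolding AS ka0 by simp
      also have "\<dots> = l *\<^sub>R R (Y n x) - Y n x" unfolding tt tl by simp
      finally show ?thesis .
    qed
    have "kb n *\<^sub>R x + \<tau> *\<^sub>R A (\<Sum>j\<le>n. ka (n - j) *\<^sub>R S j x)
        = Y n x + \<tau> *\<^sub>R (ka 0 *\<^sub>R A (S n x))"
      unfolding e scaleR_right_distrib Y_def by (simp add: algebra_simps)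
    also have "\<dots> = Y n x + (l *\<^sub>R R (Y n x) - Y n x)" by (simp only: tA)
    also have "\<dots> = S n x" by (simp add: Sdef[of n x])
    finally show ?thesis by simp
  qed
  have "discrete_resolvent_family sc \<tau> \<alpha> \<beta> D A S"
    unfolding discrete_resolvent_family_def bounded_op_def
    unfolding kb_def[symmetric] ka_def[symmetric] by (intro conjI allI ballI; (rule BL[THEN conjunct1] HOM SD EQ COMM[symmetric])?; simp add: BL HOM COMM)
  then show ?thesis by blast
qed

end
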